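(* Let $p\in\mathbb N$ with $p\ge 6$, and write $p=5k+r$ with $k\in\mathbb N$ and $0\le r\le 4$. If $G$ is a graph on $p$ vertices containing no copy of $T_6^2$, then $e(G)\le 2p-\frac{r(5-r)}{2}$.
   Context: All graphs are finite and simple; a graph "contains" $H$ if it has a subgraph isomorphic to $H$; $e(G)$ is the number of edges of $G$. $T_6^2$ is the tree on vertex set $\{v_0,\ldots,v_5\}$ with edges $v_0v_1,v_0v_2,v_0v_3,v_3v_4,v_3v_5$. *)

theory Defs
  imports Complex_Main
begin

definition simple_graph :: "'a set \<Rightarrow> 'a set set \<Rightarrow> bool" where
  "simple_graph V E \<longleftrightarrow> finite V \<and> (\<forall>e\<in>E. e \<subseteq> V \<and> card e = 2)"

definition T62_edges :: "nat set set" where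
  "T62_edges = {{0,1},{0,2},{0,3},{3,4},{3,5}}"

definition contains_T62 :: "'a set \<Rightarrow> 'a set set \<Rightarrow> bool" where
  "contains_T62 V E \<longleftrightarrow>
     (\<exists>f. inj_on f {0..5::nat} \<and> f ` {0..5} \<subseteq> V \<and> (\<forall>e\<in>T62_edges. f ` e \<in> E))"

end

theory Submission
  imports Defs
begin


definition nb :: "'a set set \<Rightarrow> 'a \<Rightarrow> 'a set" where "nb E v = {w. {v,w} \<in> E}"

lemma nb_sub: "simple_graph V E \<Longrightarrow> nb E v \<subseteq> V"
  unfolding simple_graph_def nb_def by auto

lemma nb_fin: "simple_graph V E \<Longrightarrow> finite (nb E v)"
  using nb_sub simple_graph_def finite_subset by metis

lemma no_loop: "simple_graph V E \<Longrightarrow> v \<notin> nb E v"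
  unfolding simple_graph_def nb_def by force

lemma nb_sym: "w \<in> nb E v \<longleftrightarrow> v \<in> nb E w"
  unfolding nb_def by (simp add: insert_commute)

lemma nb_V: "simple_graph V E \<Longrightarrow> w \<in> nb E v \<Longrightarrow> v \<in> V"
  unfolding simple_graph_def nb_def by auto

lemma t62:
  assumes sg: "simple_graph V E" and h: "v \<in> nb E u" "a1 \<in> nb E u" "a2 \<in> nb E u" "b1 \<in> nb E v" "b2 \<in> nb E v"
   and d: "a1\<noteq>a2" "b1\<noteq>b2" "a1\<noteq>v" "a2\<noteq>v" "b1\<noteq>u" "b2\<noteq>u" "a1\<noteq>b1" "a1\<noteq>b2" "a2\<noteq>b1" "a2\<noteq>b2"
  shows "contains_T62 V E"
proof -
  have nl: "u \<noteq> v" "a1 \<noteq> u" "a2 \<noteq> u" "b1 \<noteq> v" "b2 \<noteq> v"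
    using no_loop[OF sg] h nb_sym by metis+
  have V: "u \<in> V" "v \<in> V" "a1 \<in> V" "a2 \<in> V" "b1 \<in> V" "b2 \<in> V"
    using h nb_sub[OF sg] nb_V[OF sg] by blast+
  have I: "{0..5::nat} = {0,1,2,3,4,5}" by auto
  define f where "f = (\<lambda>i::nat. if i=0 then u else if i=1 then a1 else if i=2 then a2 else if i=3 then v else if i=4 then b1 else b2)"
  have "inj_on f {0..5}" unfolding I f_def using nl d by (auto simp: inj_on_def)
  moreover have "f ` {0..5} \<subseteq> V" unfolding I f_def using V by auto
  moreover have "\<forall>e\<in>T62_edges. f ` e \<in> E" unfolding T62_edges_def f_def using h
    by (auto simp: nb_def insert_commute)
  ultimately show ?thesis unfolding contains_T62_def by blast
qed

lemma two_elems: "2 \<le> card A \<Longrightarrow> \<exists>a b. a\<in>A \<and> b\<in>A \<and> a\<noteq>b"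
  by (metis One_nat_def card.infinite card_le_Suc0_iff_eq not_less_eq_eq numeral_2_eq_2 zero_less_Suc leD)

lemma one_elem: "1 \<le> card A \<Longrightarrow> \<exists>a. a\<in>A"
  by (metis card.empty equals0I not_one_le_zero)

lemma c3: "card {a,b,c::'a} \<le> 3" by (simp add: card_insert_if)
lemma c2: "card {a,b::'a} \<le> 2" by (simp add: card_insert_if)



lemma F1a:
  assumes sg: "simple_graph V E" and nc: "\<not> contains_T62 V E"
    and du: "5 \<le> card (nb E u)" and v: "v \<in> nb E u"
  shows "card (nb E v) \<le> 2"
proof (rule ccontr)
  assume "\<not> ?thesis"
  hence d3: "3 \<le> card (nb E v)" by simp
  have "card (nb E v) - card {u} \<le> card (nb E v - {u})" by (rule diff_card_le_card_Diff) simp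
  hence "2 \<le> card (nb E v - {u})" using d3 by simp
  then obtain b1 b2 where b: "b1 \<in> nb E v - {u}" "b2 \<in> nb E v - {u}" "b1 \<noteq> b2"
    using two_elems by blast
  have "card (nb E u) - card {v,b1,b2} \<le> card (nb E u - {v,b1,b2})" by (rule diff_card_le_card_Diff) simp
  moreover have "card {v,b1,b2} \<le> 3" by (rule c3)
  ultimately have "2 \<le> card (nb E u - {v,b1,b2})" using du by linarith
  then obtain a1 a2 where a: "a1 \<in> nb E u - {v,b1,b2}" "a2 \<in> nb E u - {v,b1,b2}" "a1 \<noteq> a2"
    using two_elems by blast
  have "contains_T62 V E"
    by (rule t62[OF sg v, of a1 a2 b1 b2]) (use a b in auto)
  with nc show False by simp
qed

lemma F1b:
  assumes sg: "simple_graph V E" and nc: "\<not> contains_T62 V E"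
    and du: "4 \<le> card (nb E u)" and v: "v \<in> nb E u" and dv: "3 \<le> card (nb E v)"
    and y: "y \<in> nb E v"
  shows "y \<in> insert u (nb E u)"
proof (rule ccontr)
  assume yn: "y \<notin> insert u (nb E u)"
  have "card (nb E v) - card {u,y} \<le> card (nb E v - {u,y})" by (rule diff_card_le_card_Diff) simp
  moreover have "card {u,y} \<le> 2" by (rule c2)
  ultimately have "1 \<le> card (nb E v - {u,y})" using dv by linarith
  then obtain b2 where b: "b2 \<in> nb E v - {u,y}" using one_elem by blast
  have "card (nb E u) - card {v,b2} \<le> card (nb E u - {v,b2})" by (rule diff_card_le_card_Diff) simp
  moreover have "card {v,b2} \<le> 2" by (rule c2)
  ultimately have "2 \<le> card (nb E u - {v,b2})" using du by linarith
  then obtain a1 a2 where a: "a1 \<in> nb E u - {v,b2}" "a2 \<in> nb E u - {v,b2}" "a1 \<noteq> a2"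
    using two_elems by blast
  have "contains_T62 V E"
    by (rule t62[OF sg v, of a1 a2 y b2]) (use a b y yn in auto)
  with nc show False by simp
qed

lemma handshake:
  assumes sg: "simple_graph V E"
  shows "(\<Sum>v\<in>V. card (nb E v)) = 2 * card E"
proof -
  have fV: "finite V" and EV: "\<And>e. e \<in> E \<Longrightarrow> e \<subseteq> V \<and> card e = 2" using sg unfolding simple_graph_def by auto
  have fE: "finite E" using fV EV by (meson finite_Pow_iff finite_subset subsetI PowI)
  have c: "card (nb E v) = card {e\<in>E. v \<in> e}" if "v \<in> V" for v
  proof (rule bij_betw_same_card)
    show "bij_betw (\<lambda>w. {v,w}) (nb E v) {e\<in>E. v \<in> e}"
    proof (rule bij_betwI')
      fix x y assume "x \<in> nb E v" "y \<in> nb E v"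
      show "({v, x} = {v, y}) = (x = y)" by (metis doubleton_eq_iff)
    next
      fix x assume "x \<in> nb E v" thus "{v,x} \<in> {e\<in>E. v \<in> e}" by (simp add: nb_def)
    next
      fix e assume e: "e \<in> {e\<in>E. v \<in> e}"
      have "card e = 2" using e EV by blast
      then obtain a b where ab: "e = {a,b}" "a \<noteq> b" by (meson card_2_iff)
      have eE: "e \<in> E" and ve: "v \<in> e" using e by auto
      show "\<exists>x\<in>nb E v. e = {v, x}"
      proof (cases "v = a")
        case True thus ?thesis using ab eE by (auto simp: nb_def)
      next
        case False hence "v = b" using ve ab by auto
        thus ?thesis using ab eE by (auto simp: nb_def insert_commute)
      qed
    qed
  qed
  have "(\<Sum>v\<in>V. card (nb E v)) = (\<Sum>v\<in>V. card {e\<in>E. v \<in> e})" using c by simp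
  also have "\<dots> = (\<Sum>v\<in>V. \<Sum>e\<in>E. if v \<in> e then 1 else 0)"
  proof (rule sum.cong[OF refl])
    fix v show "card {e\<in>E. v \<in> e} = (\<Sum>e\<in>E. if v \<in> e then 1 else 0)"
    proof -
      have "{e\<in>E. v \<in> e} = E \<inter> {e. v \<in> e}" by auto
      thus ?thesis using fE by (simp add: sum.If_cases)
    qed
  qed
  also have "\<dots> = (\<Sum>e\<in>E. \<Sum>v\<in>V. if v \<in> e then 1 else 0)" by (rule sum.swap)
  also have "\<dots> = (\<Sum>e\<in>E. card e)"
  proof (rule sum.cong[OF refl])
    fix e assume "e \<in> E"
    hence "V \<inter> e = e" using EV by auto
    hence "V \<inter> {v. v \<in> e} = e" by simp
    thus "(\<Sum>v\<in>V. if v \<in> e then 1 else 0) = card e" using fV by (simp add: sum.If_cases)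
  qed
  also have "\<dots> = (\<Sum>e\<in>E. 2)" using EV by simp
  also have "\<dots> = 2 * card E" by simp
  finally show ?thesis .
qed
lemma dcount:
  assumes sg: "simple_graph V E" and B: "B \<subseteq> V"
  shows "(\<Sum>v\<in>V. card (nb E v \<inter> B)) = (\<Sum>b\<in>B. card (nb E b))"
proof -
  have fV: "finite V" using sg simple_graph_def by auto
  have fB: "finite B" using fV B finite_subset by auto
  have "(\<Sum>v\<in>V. card (nb E v \<inter> B)) = (\<Sum>v\<in>V. \<Sum>b\<in>B. if b \<in> nb E v then 1 else 0)"
  proof (rule sum.cong[OF refl])
    fix v
    have "nb E v \<inter> B = B \<inter> {b. b \<in> nb E v}" by auto
    thus "card (nb E v \<inter> B) = (\<Sum>b\<in>B. if b \<in> nb E v then 1 else 0)" using fB by (simp add: sum.If_cases)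
  qed
  also have "\<dots> = (\<Sum>b\<in>B. \<Sum>v\<in>V. if b \<in> nb E v then 1 else 0)" by (rule sum.swap)
  also have "\<dots> = (\<Sum>b\<in>B. card (nb E b))"
  proof (rule sum.cong[OF refl])
    fix b assume "b \<in> B"
    have "V \<inter> {v. b \<in> nb E v} = nb E b"
    proof
      show "V \<inter> {v. b \<in> nb E v} \<subseteq> nb E b" by (auto simp: nb_def insert_commute)
      show "nb E b \<subseteq> V \<inter> {v. b \<in> nb E v}" using nb_sub[OF sg, of b] by (auto simp: nb_def insert_commute)
    qed
    thus "(\<Sum>v\<in>V. if b \<in> nb E v then 1 else 0) = card (nb E b)" using fV
      by (simp add: sum.If_cases)
  qed
  finally show ?thesis .
qed



lemma slack_eq:
  assumes sg: "simple_graph V E"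
  shows "(\<Sum>v\<in>V. (4 - int (card (nb E v)))) = 4 * int (card V) - 2 * int (card E)"
proof -
  have "(\<Sum>v\<in>V. (4 - int (card (nb E v)))) = (\<Sum>v\<in>V. 4) - (\<Sum>v\<in>V. int (card (nb E v)))"
    by (simp add: sum_subtractf)
  also have "(\<Sum>v\<in>V. int (card (nb E v))) = int (\<Sum>v\<in>V. card (nb E v))" by simp
  also have "\<dots> = 2 * int (card E)" using handshake[OF sg] by simp
  finally show ?thesis by simp
qed

lemma sum_sub_le:
  fixes f :: "'a \<Rightarrow> int"
  assumes "finite V" "S \<subseteq> V" "\<And>v. v \<in> V \<Longrightarrow> 0 \<le> f v"
  shows "sum f S \<le> sum f V"
  using assms by (intro sum_mono2) auto

lemma caseA:
  assumes sg: "simple_graph V E" and nc: "\<not> contains_T62 V E"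
    and z0: "z0 \<in> V" "5 \<le> card (nb E z0)"
  shows "6 \<le> (\<Sum>v\<in>V. (4 - int (card (nb E v))))"
proof -
  have fV: "finite V" using sg simple_graph_def by auto
  define B where "B = {v\<in>V. 5 \<le> card (nb E v)}"
  have BV: "B \<subseteq> V" unfolding B_def by auto
  have fB: "finite B" using fV BV finite_subset by auto
  define \<phi> where "\<phi> = (\<lambda>v. 4 - int (card (nb E v)) - int (card (nb E v \<inter> B)) + (if v \<in> B then int (card (nb E v)) else 0))"
  have nbB: "nb E v \<inter> B = {}" if "v \<in> B" for v
  proof -
    { fix w assume w: "w \<in> nb E v" "w \<in> B"
      have "card (nb E w) \<le> 2" using F1a[OF sg nc _ w(1)] that B_def by auto
      with w B_def have False by auto }
    thus ?thesis by auto
  qed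
  have phiB: "\<phi> v = 4" if "v \<in> B" for v using nbB[OF that] that unfolding \<phi>_def by simp
  have phi0: "0 \<le> \<phi> v" if "v \<in> V" for v
  proof (cases "v \<in> B")
    case True thus ?thesis using phiB by simp
  next
    case False
    show ?thesis
    proof (cases "nb E v \<inter> B = {}")
      case True
      have "card (nb E v) \<le> 4" using False that B_def by auto
      thus ?thesis using True False unfolding \<phi>_def by simp
    next
      case F2: False
      then obtain b where b: "b \<in> B" "b \<in> nb E v" by auto
      have vb: "v \<in> nb E b" using b(2) nb_sym by metis
      have "card (nb E v) \<le> 2" using F1a[OF sg nc _ vb] b B_def by auto
      moreover have "card (nb E v \<inter> B) \<le> card (nb E v)" using nb_fin[OF sg] by (simp add: card_mono)
      ultimately show ?thesis using False unfolding \<phi>_def by simp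
    qed
  qed
  have "(\<Sum>v\<in>V. \<phi> v) = (\<Sum>v\<in>V. (4 - int (card (nb E v)))) - (\<Sum>v\<in>V. int (card (nb E v \<inter> B)))
        + (\<Sum>v\<in>V. (if v \<in> B then int (card (nb E v)) else 0))"
    unfolding \<phi>_def by (simp add: sum.distrib sum_subtractf)
  moreover have "(\<Sum>v\<in>V. int (card (nb E v \<inter> B))) = (\<Sum>v\<in>V. (if v \<in> B then int (card (nb E v)) else 0))"
  proof -
    have "(\<Sum>v\<in>V. int (card (nb E v \<inter> B))) = int (\<Sum>v\<in>V. card (nb E v \<inter> B))" by simp
    also have "\<dots> = int (\<Sum>b\<in>B. card (nb E b))" using dcount[OF sg BV] by simp
    also have "\<dots> = (\<Sum>b\<in>B. int (card (nb E b)))" by simp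
    also have "\<dots> = (\<Sum>v\<in>V. (if v \<in> B then int (card (nb E v)) else 0))"
      using fV BV by (simp add: sum.If_cases Int_absorb1 inf.absorb2)
    finally show ?thesis .
  qed
  ultimately have eq: "(\<Sum>v\<in>V. \<phi> v) = (\<Sum>v\<in>V. (4 - int (card (nb E v))))" by simp
  have "6 \<le> (\<Sum>v\<in>V. \<phi> v)"
  proof (cases "2 \<le> card B")
    case True
    then obtain z1 z2 where z: "z1 \<in> B" "z2 \<in> B" "z1 \<noteq> z2" using two_elems by blast
    have "sum \<phi> {z1,z2} \<le> sum \<phi> V" using z BV by (intro sum_sub_le[OF fV _ phi0]) auto
    moreover have "sum \<phi> {z1,z2} = 8" using z phiB by simp
    ultimately show ?thesis by simp
  next
    case False
    have z0B: "z0 \<in> B" using z0 B_def by auto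
    have cB: "card B \<le> 1" using False by simp
    have "2 \<le> card (nb E z0)" using z0 by simp
    then obtain n1 n2 where n: "n1 \<in> nb E z0" "n2 \<in> nb E z0" "n1 \<noteq> n2" using two_elems by blast
    have phin: "1 \<le> \<phi> n" if "n \<in> nb E z0" for n
    proof -
      have dn: "card (nb E n) \<le> 2" using F1a[OF sg nc z0(2) that] .
      hence "n \<notin> B" using B_def by auto
      moreover have "card (nb E n \<inter> B) \<le> 1" using cB card_mono[OF fB, of "nb E n \<inter> B"] by simp
      ultimately show ?thesis using dn unfolding \<phi>_def by simp
    qed
    have nz: "n1 \<noteq> z0" "n2 \<noteq> z0" using n no_loop[OF sg] by metis+
    have nV: "n1 \<in> V" "n2 \<in> V" using n nb_sub[OF sg] by auto
    have "sum \<phi> {z0,n1,n2} \<le> sum \<phi> V" using z0 nV by (intro sum_sub_le[OF fV _ phi0]) auto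
    moreover have "sum \<phi> {z0,n1,n2} = \<phi> z0 + \<phi> n1 + \<phi> n2" using nz n by simp
    moreover have "\<phi> z0 = 4" using phiB z0B by simp
    ultimately show ?thesis using phin[OF n(1)] phin[OF n(2)] by simp
  qed
  thus ?thesis using eq by simp
qed



lemma caseC:
  assumes sg: "simple_graph V E" and nc: "\<not> contains_T62 V E"
    and p6: "6 \<le> card V"
    and conn: "\<And>X. X \<noteq> {} \<Longrightarrow> X \<subset> V \<Longrightarrow> \<not> (\<forall>e\<in>E. e \<subseteq> X \<or> e \<subseteq> V - X)"
    and le4: "\<And>v. v \<in> V \<Longrightarrow> card (nb E v) \<le> 4"
    and u: "u \<in> V" "card (nb E u) = 4"
  shows "6 \<le> (\<Sum>v\<in>V. (4 - int (card (nb E v))))"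
proof -
  have fV: "finite V" and EV: "\<And>e. e \<in> E \<Longrightarrow> e \<subseteq> V \<and> card e = 2" using sg unfolding simple_graph_def by auto
  define f where "f = (\<lambda>v. 4 - int (card (nb E v)))"
  have f0: "0 \<le> f v" if "v \<in> V" for v using le4[OF that] unfolding f_def by simp
  define X where "X = insert u (nb E u)"
  have XV: "X \<subseteq> V" unfolding X_def using u nb_sub[OF sg] by auto
  have cX: "card X = 5" unfolding X_def using u no_loop[OF sg, of u] nb_fin[OF sg] by simp
  have "X \<subset> V" using XV cX p6 by auto
  then obtain e where e: "e \<in> E" "\<not> e \<subseteq> X" "\<not> e \<subseteq> V - X" using conn[of X] unfolding X_def by auto
  obtain a b where ab: "e = {a,b}" using EV[OF e(1)] card_2_iff by metis
  have "\<exists>s x. s \<in> X \<and> x \<notin> X \<and> x \<in> nb E s"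
  proof -
    have "a \<in> V" "b \<in> V" using EV[OF e(1)] ab by auto
    hence "(a \<in> X \<and> b \<notin> X) \<or> (b \<in> X \<and> a \<notin> X)" using e(2,3) ab by auto
    moreover have "{b,a} \<in> E" using e(1) ab by (simp add: insert_commute)
    ultimately show ?thesis using e(1) ab unfolding nb_def by blast
  qed
  then obtain s x where sx: "s \<in> X" "x \<notin> X" "x \<in> nb E s" by blast
  have su: "s \<noteq> u" using sx unfolding X_def by (metis insertCI nb_sym)
  hence s: "s \<in> nb E u" using sx X_def by auto
  have xu: "x \<noteq> u" "x \<notin> nb E u" using sx X_def by auto
  have xV: "x \<in> V" using sx nb_sub[OF sg] by auto
  have ds: "card (nb E s) \<le> 2"
  proof (rule ccontr)
    assume "\<not> ?thesis"
    hence "x \<in> insert u (nb E u)" using F1b[OF sg nc _ s _ sx(3)] u by simp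
    thus False using sx X_def by simp
  qed
  have us: "u \<in> nb E s" using s nb_sym by metis
  have nbs: "w = u \<or> w = x" if "w \<in> nb E s" for w
  proof (rule ccontr)
    assume "\<not> ?thesis"
    hence "{u,x,w} \<subseteq> nb E s" using that us sx by auto
    hence "card {u,x,w} \<le> card (nb E s)" using nb_fin[OF sg] card_mono by metis
    moreover have "card {u,x,w} = 3" using xu \<open>\<not> (w = u \<or> w = x)\<close> by auto
    ultimately show False using ds by simp
  qed
  define R where "R = nb E u - {s}"
  have fR: "finite R" using nb_fin[OF sg] R_def by auto
  have cR: "card R = 3" using u s nb_fin[OF sg] R_def by simp
  have RV: "R \<subseteq> V" using nb_sub[OF sg] R_def by auto
  have sR: "s \<notin> R" using R_def by auto
  have R3: "card (nb E y) \<le> 3" if y: "y \<in> R" for y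
  proof (rule ccontr)
    assume "\<not> ?thesis"
    hence "4 \<le> card (nb E y)" by simp
    moreover have uy: "u \<in> nb E y" using y R_def nb_sym by (metis DiffD1)
    ultimately have "s \<in> insert y (nb E y)" using F1b[OF sg nc _ uy _ s] u by simp
    moreover have "s \<noteq> y" using y R_def by auto
    ultimately have "y \<in> nb E s" using nb_sym by (metis insertE)
    hence "y = u \<or> y = x" using nbs by blast
    thus False using y R_def no_loop[OF sg, of u] xu by auto
  qed
  have fs: "2 \<le> f s" using ds unfolding f_def by simp
  have fR1: "(\<Sum>y\<in>R. 1) \<le> sum f R" using R3 unfolding f_def by (intro sum_mono) auto
  have sV: "s \<in> V" using s nb_sub[OF sg] by auto
  show ?thesis
  proof (cases "\<exists>y0\<in>R. card (nb E y0) \<le> 2")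
    case True
    then obtain y0 where y0: "y0 \<in> R" "card (nb E y0) \<le> 2" by blast
    have "sum f R = f y0 + sum f (R - {y0})" using fR y0 by (simp add: sum.remove)
    moreover have "(\<Sum>y\<in>R - {y0}. 1) \<le> sum f (R - {y0})" using R3 unfolding f_def by (intro sum_mono) auto
    moreover have "card (R - {y0}) = 2" using cR y0 fR by simp
    moreover have "2 \<le> f y0" using y0 unfolding f_def by simp
    ultimately have "4 \<le> sum f R" by simp
    moreover have "sum f (insert s R) \<le> sum f V" using RV sV by (intro sum_sub_le[OF fV _ f0]) auto
    moreover have "sum f (insert s R) = f s + sum f R" using sR fR by simp
    ultimately show ?thesis using fs f_def by simp
  next
    case False
    have R3': "card (nb E y) = 3" if "y \<in> R" for y using False R3 that by force
    have "\<exists>t. t \<in> V \<and> t \<notin> X \<and> card (nb E t) \<le> 3"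
    proof (cases "card (nb E x) \<le> 3")
      case True thus ?thesis using xV sx by blast
    next
      case False
      hence dx: "card (nb E x) = 4" using le4[OF xV] by simp
      have "card (nb E x) - card {s} \<le> card (nb E x - {s})" by (rule diff_card_le_card_Diff) simp
      hence "1 \<le> card (nb E x - {s})" using dx by simp
      then obtain t where t: "t \<in> nb E x" "t \<noteq> s" using one_elem by blast
      have tV: "t \<in> V" using t nb_sub[OF sg] by auto
      have tu: "t \<noteq> u" using t xu nb_sym by metis
      have tnu: "t \<notin> nb E u"
      proof
        assume "t \<in> nb E u"
        hence tR: "t \<in> R" using t R_def by auto
        have xt: "x \<in> nb E t" using t nb_sym by metis
        have "x \<in> insert u (nb E u)" using F1b[OF sg nc _ _ _ xt] u R3'[OF tR] \<open>t \<in> nb E u\<close> by simp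
        thus False using sx X_def by simp
      qed
      have "card (nb E t) \<le> 3"
      proof (rule ccontr)
        assume "\<not> ?thesis"
        hence "4 \<le> card (nb E t)" by simp
        moreover have xt: "x \<in> nb E t" using t nb_sym by metis
        moreover have xs: "s \<in> nb E x" using sx nb_sym by metis
        ultimately have "s \<in> insert t (nb E t)" using F1b[OF sg nc _ xt _ xs] dx by simp
        hence "t \<in> nb E s" using t nb_sym by (metis insertE)
        hence "t = u \<or> t = x" using nbs by blast
        thus False using tu t no_loop[OF sg, of x] by auto
      qed
      thus ?thesis using tV tu tnu X_def by blast
    qed
    then obtain t where t: "t \<in> V" "t \<notin> X" "card (nb E t) \<le> 3" by blast
    have tR: "t \<notin> R" "t \<noteq> s" using t R_def X_def sx by auto
    have "sum f (insert s (insert t R)) \<le> sum f V" using RV sV t by (intro sum_sub_le[OF fV _ f0]) auto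
    moreover have "sum f (insert s (insert t R)) = f s + f t + sum f R" using sR tR fR by simp
    moreover have "1 \<le> f t" using t unfolding f_def by simp
    ultimately show ?thesis using fs fR1 cR f_def by simp
  qed
qed



lemma less5: "(i::nat) < 5 \<Longrightarrow> i=0 \<or> i=1 \<or> i=2 \<or> i=3 \<or> i=4" by presburger

lemma gsub_aux: "(i::nat) < 5 \<Longrightarrow> j < 5 \<Longrightarrow> ((i+j) mod 5)*(5-(i+j) mod 5) \<le> i*(5-i)+j*(5-j)"
proof -
  assume "i < 5" "j < 5"
  hence "i=0 \<or> i=1 \<or> i=2 \<or> i=3 \<or> i=4" "j=0 \<or> j=1 \<or> j=2 \<or> j=3 \<or> j=4" using less5 by auto
  thus ?thesis by (elim disjE) simp_all
qed

lemma gsub: "(((a::nat)+b) mod 5)*(5 - (a+b) mod 5) \<le> (a mod 5)*(5 - a mod 5) + (b mod 5)*(5 - b mod 5)"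
proof -
  have "(a+b) mod 5 = (a mod 5 + b mod 5) mod 5" by (simp add: mod_add_eq)
  thus ?thesis using gsub_aux[of "a mod 5" "b mod 5"] by simp
qed

lemma small: "(p::nat) \<le> 5 \<Longrightarrow> 2 * (p choose 2) + (p mod 5)*(5 - p mod 5) \<le> 4 * p"
proof -
  assume "p \<le> 5"
  hence "p=0 \<or> p=1 \<or> p=2 \<or> p=3 \<or> p=4 \<or> p = 5" by auto
  thus ?thesis by (elim disjE) (simp_all add: choose_two)
qed

lemma g6: "((p::nat) mod 5)*(5 - p mod 5) \<le> 6"
proof -
  have "p mod 5 < 5" by simp
  hence "p mod 5=0 \<or> p mod 5=1 \<or> p mod 5=2 \<or> p mod 5=3 \<or> p mod 5=4" using less5 by blast
  thus ?thesis by (elim disjE) simp_all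
qed

lemma conn:
  assumes sg: "simple_graph V E" and nc: "\<not> contains_T62 V E"
    and p6: "6 \<le> card V"
    and conn: "\<And>X. X \<noteq> {} \<Longrightarrow> X \<subset> V \<Longrightarrow> \<not> (\<forall>e\<in>E. e \<subseteq> X \<or> e \<subseteq> V - X)"
  shows "2 * card E + 6 \<le> 4 * card V"
proof -
  have "6 \<le> (\<Sum>v\<in>V. (4 - int (card (nb E v))))"
  proof (cases "\<exists>z\<in>V. 5 \<le> card (nb E z)")
    case True thus ?thesis using caseA[OF sg nc] by blast
  next
    case False
    hence le4: "\<And>v. v \<in> V \<Longrightarrow> card (nb E v) \<le> 4" by force
    show ?thesis
    proof (cases "\<exists>u\<in>V. card (nb E u) = 4")
      case True thus ?thesis using caseC[OF sg nc p6 conn le4] by blast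
    next
      case False
      hence "(\<Sum>v\<in>V. 1) \<le> (\<Sum>v\<in>V. (4 - int (card (nb E v))))"
        using le4 by (intro sum_mono) force
      thus ?thesis using p6 by simp
    qed
  qed
  thus ?thesis using slack_eq[OF sg] by simp
qed



lemma main:
  "simple_graph V E \<Longrightarrow> \<not> contains_T62 V E \<Longrightarrow>
   2 * card E + (card V mod 5) * (5 - card V mod 5) \<le> 4 * card V"
proof (induction "card V" arbitrary: V E rule: less_induct)
  case less
  have sg: "simple_graph V E" and nc: "\<not> contains_T62 V E" by fact+
  have fV: "finite V" and EV: "\<And>e. e \<in> E \<Longrightarrow> e \<subseteq> V \<and> card e = 2" using sg unfolding simple_graph_def by auto
  show ?case
  proof (cases "\<exists>X. X \<noteq> {} \<and> X \<subset> V \<and> (\<forall>e\<in>E. e \<subseteq> X \<or> e \<subseteq> V - X)")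
    case True
    then obtain X where X: "X \<noteq> {}" "X \<subset> V" "\<forall>e\<in>E. e \<subseteq> X \<or> e \<subseteq> V - X" by blast
    define E1 where "E1 = {e\<in>E. e \<subseteq> X}"
    define E2 where "E2 = {e\<in>E. e \<subseteq> V - X}"
    have fX: "finite X" using X fV finite_subset by auto
    have sg1: "simple_graph X E1" using fX EV unfolding simple_graph_def E1_def by auto
    have sg2: "simple_graph (V - X) E2" using fV EV unfolding simple_graph_def E2_def by auto
    have nc1: "\<not> contains_T62 X E1"
    proof
      assume "contains_T62 X E1"
      then obtain f where f: "inj_on f {0..5::nat}" "f ` {0..5} \<subseteq> X" "\<forall>e\<in>T62_edges. f ` e \<in> E1"
        unfolding contains_T62_def by blast
      have "f ` {0..5} \<subseteq> V" using f(2) X(2) by auto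
      moreover have "\<forall>e\<in>T62_edges. f ` e \<in> E" using f(3) unfolding E1_def by auto
      ultimately have "contains_T62 V E" using f(1) unfolding contains_T62_def by blast
      with nc show False by simp
    qed
    have nc2: "\<not> contains_T62 (V - X) E2"
    proof
      assume "contains_T62 (V - X) E2"
      then obtain f where f: "inj_on f {0..5::nat}" "f ` {0..5} \<subseteq> (V - X)" "\<forall>e\<in>T62_edges. f ` e \<in> E2"
        unfolding contains_T62_def by blast
      have "f ` {0..5} \<subseteq> V" using f(2) X(2) by auto
      moreover have "\<forall>e\<in>T62_edges. f ` e \<in> E" using f(3) unfolding E2_def by auto
      ultimately have "contains_T62 V E" using f(1) unfolding contains_T62_def by blast
      with nc show False by simp
    qed
    have c1: "card X < card V" using X fV by (simp add: psubset_card_mono)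
    have XsV: "X \<subseteq> V" using X by auto
    have cD: "card (V - X) = card V - card X" using card_Diff_subset[OF fX XsV] .
    have cXp: "0 < card X" using fX X(1) by (simp add: card_gt_0_iff)
    have cXV: "card X \<le> card V" using card_mono[OF fV XsV] .
    have c2: "card (V - X) < card V" using cD cXp cXV by simp
    have IH1: "2 * card E1 + (card X mod 5) * (5 - card X mod 5) \<le> 4 * card X"
      using less(1)[OF c1 sg1 nc1] .
    have IH2: "2 * card E2 + (card (V-X) mod 5) * (5 - card (V-X) mod 5) \<le> 4 * card (V-X)"
      using less(1)[OF c2 sg2 nc2] .
    have fE: "finite E" using fV EV by (meson finite_Pow_iff finite_subset subsetI PowI)
    have EU: "E = E1 \<union> E2" using X(3) unfolding E1_def E2_def by auto
    have Ed: "E1 \<inter> E2 = {}"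
    proof (rule ccontr)
      assume "E1 \<inter> E2 \<noteq> {}"
      then obtain e where "e \<in> E" "e \<subseteq> X" "e \<subseteq> V - X" unfolding E1_def E2_def by auto
      hence "e = {}" by auto
      with EV[OF \<open>e \<in> E\<close>] show False by simp
    qed
    have cE: "card E = card E1 + card E2"
      using EU Ed fE by (simp add: card_Un_disjoint)
    have cV: "card V = card X + card (V - X)" using cD cXV by simp
    show ?thesis using IH1 IH2 cE cV gsub[of "card X" "card (V-X)"] by simp
  next
    case False
    hence connX: "\<And>X. X \<noteq> {} \<Longrightarrow> X \<subset> V \<Longrightarrow> \<not> (\<forall>e\<in>E. e \<subseteq> X \<or> e \<subseteq> V - X)" by blast
    show ?thesis
    proof (cases "card V \<le> 5")
      case True
      have "E \<subseteq> {B. B \<subseteq> V \<and> card B = 2}" using EV by auto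
      hence "card E \<le> card {B. B \<subseteq> V \<and> card B = 2}" using fV by (intro card_mono) auto
      also have "\<dots> = card V choose 2" using fV by (rule n_subsets)
      finally show ?thesis using small[OF True] by simp
    next
      case False
      thus ?thesis using conn[OF sg nc _ connX] g6[of "card V"] by simp
    qed
  qed
qed

theorem lemma3p4:
  fixes V :: "'a set" and E :: "'a set set" and p k r :: nat
  assumes "simple_graph V E"
    and "card V = p" and "p \<ge> 6"
    and "p = 5 * k + r" and "r \<le> 4"
    and "\<not> contains_T62 V E"
  shows "real (card E) \<le> 2 * real p - real (r * (5 - r)) / 2"
proof -
  have r: "p mod 5 = r" using assms(4,5) by simp
  have "2 * card E + r * (5 - r) \<le> 4 * p" using main[OF assms(1,6)] assms(2) r by simp
  hence "real (2 * card E + r * (5 - r)) \<le> real (4 * p)" by linarith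
  thus ?thesis by simp
qed


end
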